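(* Let $A,B,C$ be subspaces. If $A\perp^{*}B$ and $A\cap B\subsetneq C\subset B$, then $A\perp^{*}C$.
   Context: Let $V$ be a vector space over a field with a nondegenerate symmetric bilinear form $\xi$ having no isotropic vectors. (Affine) subspaces are sets $p+W$ with $W$ a linear subspace. $X_1\sqcup X_2$ denotes the least subspace containing $X_1\cup X_2$. For nonempty subspaces $X,Y$: $X\perp Y$ iff $\xi(b-a,d-c)=0$ for all $a,b\in X$, $c,d\in Y$; $X\perp_x Y$ iff $X\perp Y$ and $X\cap Y\neq\emptyset$. $X_1\perp^{\circ}X_2$ iff there are a point $q\in X_1\cap X_2$ and subspaces $Z_1,Z_2$ with $q\in Z_1,Z_2$, $Z_i\perp_x X_1\cap X_2$, $Z_1\perp_x Z_2$, and $(X_1\cap X_2)\sqcup Z_i=X_i$ for $i=1,2$. $X_1\perp^{*}X_2$ iff $X_1\perp^{\circ}X_2$ and $X_1\cap X_2$ is different from both $X_1$ and $X_2$. *)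

theory Defs
  imports Main "HOL.Vector_Spaces"
begin

definition sym_bilinear :: "('k::field \<Rightarrow> 'v::ab_group_add \<Rightarrow> 'v) \<Rightarrow> ('v \<Rightarrow> 'v \<Rightarrow> 'k) \<Rightarrow> bool" where
  "sym_bilinear scale xi \<longleftrightarrow>
     (\<forall>x y z. xi (x + y) z = xi x z + xi y z) \<and>
     (\<forall>c x y. xi (scale c x) y = c * xi x y) \<and>
     (\<forall>x y. xi x y = xi y x)"

definition nondegenerate :: "('v::ab_group_add \<Rightarrow> 'v \<Rightarrow> 'k::field) \<Rightarrow> bool" where
  "nondegenerate xi \<longleftrightarrow> (\<forall>x. (\<forall>y. xi x y = 0) \<longrightarrow> x = 0)"

definition no_isotropic :: "('v::ab_group_add \<Rightarrow> 'v \<Rightarrow> 'k::field) \<Rightarrow> bool" where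
  "no_isotropic xi \<longleftrightarrow> (\<forall>x. xi x x = 0 \<longrightarrow> x = 0)"

text \<open>(Affine) subspaces: sets p + W with W a linear subspace (hence nonempty).\<close>
definition aff_sub :: "('k::field \<Rightarrow> 'v::ab_group_add \<Rightarrow> 'v) \<Rightarrow> 'v set \<Rightarrow> bool" where
  "aff_sub scale X \<longleftrightarrow> (\<exists>p W. module.subspace scale W \<and> X = (\<lambda>w. p + w) ` W)"

definition join :: "('k::field \<Rightarrow> 'v::ab_group_add \<Rightarrow> 'v) \<Rightarrow> 'v set \<Rightarrow> 'v set \<Rightarrow> 'v set" where
  "join scale X Y = \<Inter>{Z. aff_sub scale Z \<and> X \<union> Y \<subseteq> Z}"

definition perp :: "('k::field \<Rightarrow> 'v::ab_group_add \<Rightarrow> 'v) \<Rightarrow> ('v \<Rightarrow> 'v \<Rightarrow> 'k) \<Rightarrow> 'v set \<Rightarrow> 'v set \<Rightarrow> bool" where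
  "perp scale xi X Y \<longleftrightarrow> aff_sub scale X \<and> aff_sub scale Y \<and>
     (\<forall>a\<in>X. \<forall>b\<in>X. \<forall>c\<in>Y. \<forall>d\<in>Y. xi (b - a) (d - c) = 0)"

definition perp_x :: "('k::field \<Rightarrow> 'v::ab_group_add \<Rightarrow> 'v) \<Rightarrow> ('v \<Rightarrow> 'v \<Rightarrow> 'k) \<Rightarrow> 'v set \<Rightarrow> 'v set \<Rightarrow> bool" where
  "perp_x scale xi X Y \<longleftrightarrow> perp scale xi X Y \<and> X \<inter> Y \<noteq> {}"

definition perp_circ :: "('k::field \<Rightarrow> 'v::ab_group_add \<Rightarrow> 'v) \<Rightarrow> ('v \<Rightarrow> 'v \<Rightarrow> 'k) \<Rightarrow> 'v set \<Rightarrow> 'v set \<Rightarrow> bool" where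
  "perp_circ scale xi X1 X2 \<longleftrightarrow>
     (\<exists>q Z1 Z2. q \<in> X1 \<inter> X2 \<and> q \<in> Z1 \<and> q \<in> Z2 \<and>
        perp_x scale xi Z1 (X1 \<inter> X2) \<and> perp_x scale xi Z2 (X1 \<inter> X2) \<and>
        perp_x scale xi Z1 Z2 \<and>
        join scale (X1 \<inter> X2) Z1 = X1 \<and> join scale (X1 \<inter> X2) Z2 = X2)"

definition perp_star :: "('k::field \<Rightarrow> 'v::ab_group_add \<Rightarrow> 'v) \<Rightarrow> ('v \<Rightarrow> 'v \<Rightarrow> 'k) \<Rightarrow> 'v set \<Rightarrow> 'v set \<Rightarrow> bool" where
  "perp_star scale xi X1 X2 \<longleftrightarrow> perp_circ scale xi X1 X2 \<and> X1 \<inter> X2 \<noteq> X1 \<and> X1 \<inter> X2 \<noteq> X2"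

end

theory Submission
  imports Defs
begin

context vector_space
begin

lemma aff_dir:
  assumes "aff_sub scale S" "q \<in> S"
  shows "subspace {v. q + v \<in> S} \<and> S = (\<lambda>w. q + w) ` {v. q + v \<in> S}"
proof -
  obtain p W where W: "subspace W" "S = (\<lambda>w. p + w) ` W"
    using assms(1) unfolding aff_sub_def by blast
  then obtain w0 where w0: "w0 \<in> W" "q = p + w0" using assms(2) by blast
  have eq: "{v. q + v \<in> S} = W"
  proof safe
    fix v assume "q + v \<in> S"
    then obtain w where "w \<in> W" "q + v = p + w" using W by blast
    then have "v = w - w0" using w0 by (simp add: algebra_simps)
    then show "v \<in> W" using \<open>w \<in> W\<close> w0 W subspace_diff by blast
  next
    fix v assume "v \<in> W"
    then have "w0 + v \<in> W" using w0 W subspace_add by blast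
    then show "q + v \<in> S" using W w0 by (force simp: add.assoc)
  qed
  have "S = (\<lambda>w. q + w) ` W"
  proof safe
    fix x assume "x \<in> S"
    then obtain w where "w \<in> W" "x = p + w" using W by blast
    then have "x = q + (w - w0)" "w - w0 \<in> W" using w0 W subspace_diff by (auto simp: algebra_simps)
    then show "x \<in> (\<lambda>w. q + w) ` W" by blast
  next
    fix w assume "w \<in> W"
    then show "q + w \<in> S" using eq by blast
  qed
  then show ?thesis using eq W by simp
qed

lemma aff_of: "subspace W \<Longrightarrow> aff_sub scale ((\<lambda>w. q + w) ` W)"
  unfolding aff_sub_def by blast

lemma subspace_plus:
  assumes "subspace U" "subspace V"
  shows "subspace {u + v | u v. u \<in> U \<and> v \<in> V}"
  unfolding subspace_def
proof (intro conjI ballI allI)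
  show "0 \<in> {u + v | u v. u \<in> U \<and> v \<in> V}" using assms subspace_0 by force
next
  fix x y assume "x \<in> {u + v | u v. u \<in> U \<and> v \<in> V}" "y \<in> {u + v | u v. u \<in> U \<and> v \<in> V}"
  then obtain u1 v1 u2 v2 where "x = u1 + v1" "y = u2 + v2" "u1 \<in> U" "v1 \<in> V" "u2 \<in> U" "v2 \<in> V" by blast
  then show "x + y \<in> {u + v | u v. u \<in> U \<and> v \<in> V}"
    using assms subspace_add by (intro CollectI exI[of _ "u1+u2"] exI[of _ "v1+v2"]) (auto simp: algebra_simps)
next
  fix c x assume "x \<in> {u + v | u v. u \<in> U \<and> v \<in> V}"
  then obtain u1 v1 where "x = u1 + v1" "u1 \<in> U" "v1 \<in> V" by blast
  then show "c *s x \<in> {u + v | u v. u \<in> U \<and> v \<in> V}"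
    using assms subspace_scale by (intro CollectI exI[of _ "c *s u1"] exI[of _ "c *s v1"]) (auto simp: scale_right_distrib)
qed

lemma join_eq:
  assumes "aff_sub scale X" "aff_sub scale Y" "q \<in> X" "q \<in> Y"
  shows "join scale X Y = (\<lambda>w. q + w) ` {u + v | u v. u \<in> {v. q + v \<in> X} \<and> v \<in> {v. q + v \<in> Y}}"
    (is "_ = ?R")
proof
  let ?U = "{v. q + v \<in> X}" and ?V = "{v. q + v \<in> Y}"
  have U: "subspace ?U" and V: "subspace ?V" using aff_dir assms by blast+
  have "aff_sub scale ?R" by (rule aff_of, rule subspace_plus[OF U V])
  moreover have "X \<union> Y \<subseteq> ?R"
  proof
    fix x assume "x \<in> X \<union> Y"
    then show "x \<in> ?R"
    proof
      assume "x \<in> X"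
      then have "x = q + ((x - q) + 0)" "x - q \<in> ?U" "0 \<in> ?V" using assms by auto
      then show ?thesis by blast
    next
      assume "x \<in> Y"
      then have "x = q + (0 + (x - q))" "x - q \<in> ?V" "0 \<in> ?U" using assms by auto
      then show ?thesis by blast
    qed
  qed
  ultimately show "join scale X Y \<subseteq> ?R" unfolding join_def by blast
next
  show "?R \<subseteq> join scale X Y" unfolding join_def
  proof (rule Inter_greatest)
    fix Z assume "Z \<in> {Z. aff_sub scale Z \<and> X \<union> Y \<subseteq> Z}"
    then have Z: "aff_sub scale Z" "X \<union> Y \<subseteq> Z" by auto
    then have qZ: "q \<in> Z" using assms by auto
    have WZ: "subspace {v. q + v \<in> Z}" using aff_dir[OF Z(1) qZ] by blast
    show "?R \<subseteq> Z"
    proof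
      fix x assume "x \<in> ?R"
      then obtain u v where "x = q + (u + v)" "q + u \<in> X" "q + v \<in> Y" by blast
      then have "u \<in> {v. q + v \<in> Z}" "v \<in> {v. q + v \<in> Z}" "x = q + (u+v)" using Z by auto
      then show "x \<in> Z" using subspace_add[OF WZ] by blast
    qed
  qed
qed

end

theorem proposition3p3:
  fixes scale :: "'k::field \<Rightarrow> 'v::ab_group_add \<Rightarrow> 'v"
    and xi :: "'v \<Rightarrow> 'v \<Rightarrow> 'k"
    and A B C :: "'v set"
  assumes "vector_space scale"
    and "sym_bilinear scale xi"
    and "nondegenerate xi"
    and "no_isotropic xi"
    and "aff_sub scale A" and "aff_sub scale B" and "aff_sub scale C"
    and "perp_star scale xi A B"
    and "A \<inter> B \<subset> C" and "C \<subseteq> B"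
  shows "perp_star scale xi A C"
proof -
  interpret vector_space scale by (rule assms(1))
  define D where "D = A \<inter> B"
  have AC: "A \<inter> C = D" using assms(9,10) D_def by blast
  obtain q Z1 Z2 where q: "q \<in> D" "q \<in> Z1" "q \<in> Z2"
    and p1: "perp_x scale xi Z1 D" and p2: "perp_x scale xi Z2 D" and p12: "perp_x scale xi Z1 Z2"
    and j1: "join scale D Z1 = A" and j2: "join scale D Z2 = B"
    and ne: "D \<noteq> A"
    using assms(8) unfolding perp_star_def perp_circ_def D_def by blast
  have affD: "aff_sub scale D" and affZ1: "aff_sub scale Z1" and affZ2: "aff_sub scale Z2"
    using p1 p2 unfolding perp_x_def perp_def by auto
  have qC: "q \<in> C" using q assms(9) D_def by blast
  define Z where "Z = C \<inter> Z2"
  have qZ: "q \<in> Z" using qC q Z_def by blast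
  obtain sC eC where sC: "subspace {v. q + v \<in> C}" and eC: "C = (\<lambda>w. q + w) ` {v. q + v \<in> C}"
    using aff_dir[OF assms(7) qC] by blast
  have s2: "subspace {v. q + v \<in> Z2}" using aff_dir[OF affZ2 q(3)] by blast
  have sD: "subspace {v. q + v \<in> D}" using aff_dir[OF affD q(1)] by blast
  have dZ: "{v. q + v \<in> Z} = {v. q + v \<in> C} \<inter> {v. q + v \<in> Z2}" using Z_def by auto
  have affZ: "aff_sub scale Z"
  proof -
    have "Z = (\<lambda>w. q + w) ` {v. q + v \<in> Z}"
    proof safe
      fix x assume "x \<in> Z" then have "x = q + (x - q)" "q + (x - q) \<in> Z" by auto
      then show "x \<in> (\<lambda>w. q + w) ` {v. q + v \<in> Z}" by blast
    qed
    then show ?thesis using aff_of[OF subspace_inter[OF sC s2]] dZ by simp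
  qed
  have pZD: "perp_x scale xi Z D" using p2 affZ qZ q(1) unfolding perp_x_def perp_def Z_def by blast
  have p1Z: "perp_x scale xi Z1 Z" using p12 affZ qZ q(2) unfolding perp_x_def perp_def Z_def by blast
  have jB: "B = (\<lambda>w. q + w) ` {u + v | u v. u \<in> {v. q + v \<in> D} \<and> v \<in> {v. q + v \<in> Z2}}"
    using join_eq[OF affD affZ2 q(1) q(3)] j2 by simp
  have jC: "join scale D Z = C"
  proof -
    have "join scale D Z = (\<lambda>w. q + w) ` {u + v | u v. u \<in> {v. q + v \<in> D} \<and> v \<in> {v. q + v \<in> Z}}"
      by (rule join_eq[OF affD affZ q(1) qZ])
    also have "{u + v | u v. u \<in> {v. q + v \<in> D} \<and> v \<in> {v. q + v \<in> Z}} = {v. q + v \<in> C}"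
    proof safe
      fix u v assume "q + u \<in> D" "q + v \<in> Z"
      then have "u \<in> {v. q + v \<in> C}" "v \<in> {v. q + v \<in> C}" using AC Z_def by auto
      then show "q + (u + v) \<in> C" using subspace_add[OF sC] by blast
    next
      fix c assume "q + c \<in> C"
      then have "q + c \<in> B" using assms(10) by blast
      then obtain u v where uv: "c = u + v" "q + u \<in> D" "q + v \<in> Z2" using jB by auto
      have "u \<in> {v. q + v \<in> C}" using uv AC by auto
      then have "c - u \<in> {v. q + v \<in> C}" using subspace_diff[OF sC] \<open>q + c \<in> C\<close> by blast
      then have "q + v \<in> Z" using uv Z_def by (simp add: algebra_simps)
      then show "\<exists>u v. c = u + v \<and> u \<in> {v. q + v \<in> D} \<and> v \<in> {v. q + v \<in> Z}" using uv by blast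
    qed
    finally show ?thesis using eC by simp
  qed
  have "perp_circ scale xi A C"
    unfolding perp_circ_def AC using q(1,2) qZ p1 pZD p1Z j1 jC by blast
  moreover have "A \<inter> C \<noteq> C" using AC assms(9) D_def by blast
  ultimately show ?thesis unfolding perp_star_def using AC ne by blast
qed

end
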